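(* Let $X$ be a compact metric space and let $f:X\to X$ be a continuous function such that every accumulation point of $X$ is a fixed point of $f$. If $V,W\subseteq X$ are nonempty open sets such that $\overline V\cap\overline W=\emptyset$, then the set $\{x\in X: x\in V \text{ and } f(x)\in W\}$ is finite.
   Context: An accumulation point of $X$ is a non-isolated point of $X$; a point $x$ is fixed if $f(x)=x$. *)

theory Defs
  imports "HOL-Analysis.Analysis"
begin

end

theory Submission
  imports Defs
begin

theorem lemma3p3:
  fixes X :: "'a::metric_space set" and f :: "'a \<Rightarrow> 'a" and V W :: "'a set"
  assumes "compact X"
    and "continuous_on X f" and "f ` X \<subseteq> X"
    and "\<forall>x\<in>X. x islimpt X \<longrightarrow> f x = x"
    and "openin (top_of_set X) V" and "openin (top_of_set X) W"
    and "V \<noteq> {}" and "W \<noteq> {}"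
    and "closure V \<inter> closure W = {}"
  shows "finite {x \<in> X. x \<in> V \<and> f x \<in> W}"
proof (rule ccontr)
  let ?S = "{x \<in> X. x \<in> V \<and> f x \<in> W}"
  assume inf: "infinite ?S"
  have sub: "?S \<subseteq> X" by auto
  obtain p where p: "p \<in> X" "p islimpt ?S"
    using Heine_Borel_imp_Bolzano_Weierstrass[OF assms(1) inf sub] by blast
  have "p islimpt X" using islimpt_subset[OF p(2) sub] .
  hence fp: "f p = p" using assms(4) p(1) by simp
  have pc: "p \<in> closure ?S" using p(2) by (simp add: closure_def)
  have "closure ?S \<subseteq> X"
    using closure_minimal[OF sub] compact_imp_closed[OF assms(1)] by blast
  hence cont: "continuous_on (closure ?S) f" using assms(2) continuous_on_subset by blast
  have "f ` closure ?S \<subseteq> closure W"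
    by (rule image_closure_subset[OF cont]) (use closure_subset in auto)
  hence "f p \<in> closure W" using pc by blast
  moreover have "closure ?S \<subseteq> closure V" by (rule closure_mono) auto
  hence "p \<in> closure V" using pc by (rule subsetD)
  ultimately show False using fp assms(9) by auto
qed

end
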